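(* Let $D\ge2$ and let $\Lambda\subseteq\mathbb Z^D$ be the lattice with generator matrix $G=(v_{jr})_{1\le j,r\le D}$, where row $j$ is $(v_{j1},\dots,v_{jD})$. Assume $\Lambda$ induces a lattice tiling of the shape $\mathcal S$. Let $\ell_1\ge1$ and $\ell_2\ge0$ be integers with $\ell_1+\ell_2\le D$. Let $\delta=(d_1,\dots,d_D)$ with <ul> <li>$d_r=+1$ for $1\le r\le\ell_1$,</li> <li>$d_r=-1$ for $\ell_1<r\le\ell_1+\ell_2$,</li> <li>$d_r=0$ for $\ell_1+\ell_2<r\le D$.</li> </ul> For $2\le r\le D$ and $1\le j\le D$ define <ul> <li>$u_{rj}=v_{jr}-v_{j1}$ if $2\le r\le \ell_1$,</li> <li>$u_{rj}=v_{jr}+v_{j1}$ if $\ell_1+1\le r\le \ell_1+\ell_2$,</li> <li>$u_{rj}=v_{jr}$ if $\ell_1+\ell_2+1\le r\le D$.</li> </ul> Let $H$ be the $(D-1)\times D$ matrix $(u_{rj})_{2\le r\le D,\,1\le j\le D}$. For $1\le i\le D$, let $H_i$ be the $(D-1)\times(D-1)$ matrix obtained from $H$ by deleting its $i$-th column. Then $(\Lambda,\mathcal S,\delta)$ defines a folding if and only if $\gcd(\det H_1,\det H_2,\dots,\det H_D)=1$.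
   Context: Let $D\ge 1$. A shape is a finite nonempty set $\mathcal S\subset\mathbb Z^D$ containing the origin; the origin is its distinguished center point. A lattice is a set $\Lambda=\{\sum_{j=1}^D u_jv_j : u_1,\dots,u_D\in\mathbb Z\}$ for linearly independent $v_1,\dots,v_D\in\mathbb Z^D$. The $D\times D$ matrix $G$ whose rows are $v_1,\dots,v_D$ is a generator matrix of $\Lambda$. $\Lambda$ induces a lattice tiling of $\mathcal S$ if the translates $\mathcal S+\lambda$, $\lambda\in\Lambda$, are pairwise disjoint and cover $\mathbb Z^D$. The translate $\mathcal S+\lambda$ is called the copy of $\mathcal S$ with center $\lambda$. For $x\in\mathbb Z^D$, $c(x)$ denotes the unique $\lambda\in\Lambda$ with $x\in\mathcal S+\lambda$. A ternary vector (direction) is a nonzero $\delta\in\{-1,0,+1\}^D$. The folded-row of $(\Lambda,\mathcal S,\delta)$ is the sequence $p_0,p_1,p_2,\dots$ defined by $p_0=0$ and $p_{k+1}=(p_k+\delta)-c(p_k+\delta)$. Equivalently, $p_{k+1}=p_k+\delta$ if $p_k+\delta\in\mathcal S$; otherwise $p_{k+1}$ is $p_k+\delta$ minus the center of the copy of $\mathcal S$ containing $p_k+\delta$. The triple $(\Lambda,\mathcal S,\delta)$ defines a folding if every element of $\mathcal S$ occurs in its folded-row. *)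

theory Defs
  imports Main "Jordan_Normal_Form.Determinant"
begin

text \<open>Points of Z^D are functions nat => int vanishing outside the indices {0..<D}
  (coordinate r of the paper, 1 <= r <= D, is index r-1 here).
  A generator matrix G is given by its entries G j r (row j, column r), 0-based.\<close>

definition ZD :: "nat \<Rightarrow> (nat \<Rightarrow> int) set" where
  "ZD D = {x. \<forall>i\<ge>D. x i = 0}"

definition vadd :: "(nat \<Rightarrow> int) \<Rightarrow> (nat \<Rightarrow> int) \<Rightarrow> nat \<Rightarrow> int" where
  "vadd x y = (\<lambda>i. x i + y i)"

definition vsub :: "(nat \<Rightarrow> int) \<Rightarrow> (nat \<Rightarrow> int) \<Rightarrow> nat \<Rightarrow> int" where
  "vsub x y = (\<lambda>i. x i - y i)"

definition rows_lin_indep :: "nat \<Rightarrow> (nat \<Rightarrow> nat \<Rightarrow> int) \<Rightarrow> bool" where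
  "rows_lin_indep D G \<longleftrightarrow>
     (\<forall>a :: nat \<Rightarrow> real. (\<forall>r<D. (\<Sum>j<D. a j * real_of_int (G j r)) = 0) \<longrightarrow> (\<forall>j<D. a j = 0))"

definition lattice :: "nat \<Rightarrow> (nat \<Rightarrow> nat \<Rightarrow> int) \<Rightarrow> (nat \<Rightarrow> int) set" where
  "lattice D G = {x. \<exists>u :: nat \<Rightarrow> int. x = (\<lambda>r. if r < D then (\<Sum>j<D. u j * G j r) else 0)}"

definition is_shape :: "nat \<Rightarrow> (nat \<Rightarrow> int) set \<Rightarrow> bool" where
  "is_shape D S \<longleftrightarrow> finite S \<and> S \<noteq> {} \<and> S \<subseteq> ZD D \<and> (\<lambda>_. 0) \<in> S"

definition translate :: "(nat \<Rightarrow> int) set \<Rightarrow> (nat \<Rightarrow> int) \<Rightarrow> (nat \<Rightarrow> int) set" where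
  "translate S c = (\<lambda>s. vadd s c) ` S"

definition lattice_tiling :: "nat \<Rightarrow> (nat \<Rightarrow> int) set \<Rightarrow> (nat \<Rightarrow> int) set \<Rightarrow> bool" where
  "lattice_tiling D L S \<longleftrightarrow>
     (\<forall>a\<in>L. \<forall>b\<in>L. a \<noteq> b \<longrightarrow> translate S a \<inter> translate S b = {}) \<and>
     (\<Union>a\<in>L. translate S a) = ZD D"

definition center :: "(nat \<Rightarrow> int) set \<Rightarrow> (nat \<Rightarrow> int) set \<Rightarrow> (nat \<Rightarrow> int) \<Rightarrow> nat \<Rightarrow> int" where
  "center L S x = (THE c. c \<in> L \<and> x \<in> translate S c)"

primrec folded_row :: "(nat \<Rightarrow> int) set \<Rightarrow> (nat \<Rightarrow> int) set \<Rightarrow> (nat \<Rightarrow> int) \<Rightarrow> nat \<Rightarrow> nat \<Rightarrow> int" where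
  "folded_row L S \<delta> 0 = (\<lambda>_. 0)"
| "folded_row L S \<delta> (Suc k) =
     vsub (vadd (folded_row L S \<delta> k) \<delta>) (center L S (vadd (folded_row L S \<delta> k) \<delta>))"

definition defines_folding :: "(nat \<Rightarrow> int) set \<Rightarrow> (nat \<Rightarrow> int) set \<Rightarrow> (nat \<Rightarrow> int) \<Rightarrow> bool" where
  "defines_folding L S \<delta> \<longleftrightarrow> S \<subseteq> range (folded_row L S \<delta>)"

definition delta_dir :: "nat \<Rightarrow> nat \<Rightarrow> nat \<Rightarrow> int" where
  "delta_dir l1 l2 = (\<lambda>i. if i < l1 then 1 else if i < l1 + l2 then -1 else 0)"

text \<open>u_{rj} with 0-based r0 = r-1 (1 <= r0 <= D-1) and j0 = j-1.\<close>
definition uentry :: "nat \<Rightarrow> nat \<Rightarrow> (nat \<Rightarrow> nat \<Rightarrow> int) \<Rightarrow> nat \<Rightarrow> nat \<Rightarrow> int" where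
  "uentry l1 l2 G r0 j0 =
     (if r0 < l1 then G j0 r0 - G j0 0
      else if r0 < l1 + l2 then G j0 r0 + G j0 0
      else G j0 r0)"

definition Hmat :: "nat \<Rightarrow> nat \<Rightarrow> nat \<Rightarrow> (nat \<Rightarrow> nat \<Rightarrow> int) \<Rightarrow> int mat" where
  "Hmat D l1 l2 G = mat (D - 1) D (\<lambda>(a, b). uentry l1 l2 G (a + 1) b)"

text \<open>H_i (i 0-based column index): H with column i deleted.\<close>
definition Hdel :: "nat \<Rightarrow> nat \<Rightarrow> nat \<Rightarrow> (nat \<Rightarrow> nat \<Rightarrow> int) \<Rightarrow> nat \<Rightarrow> int mat" where
  "Hdel D l1 l2 G i =
     mat (D - 1) (D - 1) (\<lambda>(a, b). Hmat D l1 l2 G $$ (a, if b < i then b else b + 1))"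

end

theory Submission
  imports Defs
begin


lemma sum_ind: "(\<Sum>j\<in>A. (f j :: int) * (if j = t then 1 else 0)) = (if t \<in> A then f t else 0)" if "finite A"
  using that by (simp add: if_distrib sum.delta cong: if_cong)

lemma del_eq_mult:
  fixes H :: "int mat"
  assumes H: "H \<in> carrier_mat n (Suc n)" and i: "i \<le> n"
  shows "mat n n (\<lambda>(a,b). H $$ (a, if b < i then b else b+1)) =
    H * mat (Suc n) n (\<lambda>(j,b). if j = (if b<i then b else b+1) then 1 else 0)"
proof (rule eq_matI)
  fix a b assume ab: "a < dim_row (H * mat (Suc n) n (\<lambda>(j,b). if j = (if b<i then b else b+1) then 1 else 0))"
    "b < dim_col (H * mat (Suc n) n (\<lambda>(j,b). if j = (if b<i then b else b+1) then 1 else 0))"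
  then have a: "a < n" and b: "b < n" using H by auto
  have "(H * mat (Suc n) n (\<lambda>(j,b). if j = (if b<i then b else b+1) then 1 else 0)) $$ (a,b)
     = (\<Sum>j\<in>{0..<Suc n}. H $$ (a,j) * (if j = (if b<i then b else b+1) then 1 else 0))"
    using a b H by (simp add: scalar_prod_def)
  also have "\<dots> = H $$ (a, if b < i then b else b+1)"
    by (subst sum_ind) (use b in auto)
  finally show "mat n n (\<lambda>(a,b). H $$ (a, if b < i then b else b+1)) $$ (a, b) =
    (H * mat (Suc n) n (\<lambda>(j,b). if j = (if b<i then b else b+1) then 1 else 0)) $$ (a, b)"
    using a b by simp
qed (use H in auto)

lemma gcd_comb: "\<exists>c. Gcd ((f::nat\<Rightarrow>int) ` {..<k}) = (\<Sum>i<k. c i * f i)"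
proof (induction k)
  case 0 then show ?case by simp
next
  case (Suc k)
  then obtain c where c: "Gcd (f ` {..<k}) = (\<Sum>i<k. c i * f i)" by blast
  obtain s t where st: "s * f k + t * Gcd (f ` {..<k}) = gcd (f k) (Gcd (f ` {..<k}))"
    using bezout_int by blast
  define c' where "c' = (\<lambda>i. if i = k then s else t * c i)"
  have "Gcd (f ` {..<Suc k}) = gcd (f k) (Gcd (f ` {..<k}))"
    by (simp add: lessThan_Suc)
  also have "\<dots> = s * f k + t * (\<Sum>i<k. c i * f i)" using st c by simp
  also have "\<dots> = (\<Sum>i<Suc k. c' i * f i)"
    by (simp add: c'_def sum_distrib_left mult.assoc)
  finally show ?case by blast
qed

lemma col_from_gcd:
  fixes H :: "int mat"
  assumes H: "H \<in> carrier_mat n (Suc n)"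
    and g: "Gcd ((\<lambda>i. det (mat n n (\<lambda>(a,b). H $$ (a, if b < i then b else b+1)))) ` {..<Suc n}) = 1"
    and y: "y \<in> carrier_vec n"
  shows "\<exists>v\<in>carrier_vec (Suc n). H *\<^sub>v v = y"
proof -
  define Hd where "Hd = (\<lambda>i. mat n n (\<lambda>(a,b). H $$ (a, if b < i then b else b+1)))"
  define P where "P = (\<lambda>i. mat (Suc n) n (\<lambda>(j,b). if j = (if b<i then b else b+1) then (1::int) else 0))"
  obtain c where c: "1 = (\<Sum>i<Suc n. c i * det (Hd i))"
    using gcd_comb[of "\<lambda>i. det (Hd i)" "Suc n"] g unfolding Hd_def by auto
  define V where "V = (\<lambda>i. P i * adj_mat (Hd i) *\<^sub>v y)"
  have Hdc: "Hd i \<in> carrier_mat n n" for i unfolding Hd_def by simp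
  have Pc: "P i \<in> carrier_mat (Suc n) n" for i unfolding P_def by simp
  have Vc: "V i \<in> carrier_vec (Suc n)" for i unfolding V_def using mult_mat_vec_carrier[OF mult_carrier_mat[OF Pc adj_mat(1)[OF Hdc]] y] .
  have HV: "H *\<^sub>v V i = det (Hd i) \<cdot>\<^sub>v y" if i: "i < Suc n" for i
  proof -
    have "H *\<^sub>v V i = (H * P i * adj_mat (Hd i)) *\<^sub>v y"
      unfolding V_def
      using assoc_mult_mat_vec[OF Pc adj_mat(1)[OF Hdc] y] assoc_mult_mat_vec[OF mult_carrier_mat[OF H Pc] adj_mat(1)[OF Hdc] y]
        assoc_mult_mat_vec[OF H Pc mult_mat_vec_carrier[OF adj_mat(1)[OF Hdc] y]]
      by simp
    also have "H * P i = Hd i" unfolding Hd_def P_def using del_eq_mult[OF H, of i] i by simp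
    also have "Hd i * adj_mat (Hd i) = det (Hd i) \<cdot>\<^sub>m 1\<^sub>m n" using adj_mat(2)[OF Hdc] .
    also have "(det (Hd i) \<cdot>\<^sub>m 1\<^sub>m n) *\<^sub>v y = det (Hd i) \<cdot>\<^sub>v y" using y by auto
    finally show ?thesis .
  qed
  define v where "v = vec (Suc n) (\<lambda>j. \<Sum>i<Suc n. c i * V i $ j)"
  have "H *\<^sub>v v = y"
  proof (rule eq_vecI)
    fix a assume "a < dim_vec y"
    then have a: "a < n" using y by simp
    have "(H *\<^sub>v v) $ a = (\<Sum>j\<in>{0..<Suc n}. H $$ (a,j) * (\<Sum>i<Suc n. c i * V i $ j))"
      using a H by (simp add: v_def scalar_prod_def)
    also have "\<dots> = (\<Sum>i<Suc n. c i * (\<Sum>j\<in>{0..<Suc n}. H $$ (a,j) * V i $ j))"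
      unfolding sum_distrib_left by (rule trans[OF sum.swap]) (simp add: mult.left_commute)
    also have "\<dots> = (\<Sum>i<Suc n. c i * (H *\<^sub>v V i) $ a)"
    proof -
      have "(H *\<^sub>v V i) $ a = (\<Sum>j\<in>{0..<Suc n}. H $$ (a,j) * V i $ j)" for i
      proof -
        have d: "dim_vec (V i) = Suc n" using Vc[of i] by simp
        show ?thesis using a H by (simp add: scalar_prod_def d)
      qed
      then show ?thesis by simp
    qed
    also have "\<dots> = (\<Sum>i<Suc n. c i * det (Hd i) * y $ a)"
      using a y HV by (intro sum.cong) auto
    also have "\<dots> = y $ a" using c by (simp add: sum_distrib_right[symmetric])
    finally show "(H *\<^sub>v v) $ a = y $ a" .
  qed (use H y in auto)
  then show ?thesis unfolding v_def by auto
qed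

lemma gcd_from_col:
  fixes H :: "int mat"
  assumes H: "H \<in> carrier_mat n (Suc n)"
    and sp: "\<forall>y\<in>carrier_vec n. \<exists>v\<in>carrier_vec (Suc n). H *\<^sub>v v = y"
  shows "Gcd ((\<lambda>i. det (mat n n (\<lambda>(a,b). H $$ (a, if b < i then b else b+1)))) ` {..<Suc n}) = 1"
proof -
  define Hd where "Hd = (\<lambda>i. mat n n (\<lambda>(a,b). H $$ (a, if b < i then b else b+1)))"
  define g where "g = Gcd ((\<lambda>i. det (Hd i)) ` {..<Suc n})"
  have "\<forall>k. \<exists>v. k < n \<longrightarrow> v \<in> carrier_vec (Suc n) \<and> H *\<^sub>v v = unit_vec n k"
    using sp by (metis unit_vec_carrier)
  then obtain xs where xs: "\<And>k. k < n \<Longrightarrow> xs k \<in> carrier_vec (Suc n) \<and> H *\<^sub>v xs k = unit_vec n k"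
    by metis
  have hx: "(\<Sum>c\<in>{0..<Suc n}. H $$ (a,c) * xs b $ c) = (if a = b then 1 else 0)"
    if "a < n" "b < n" for a b
  proof -
    have d: "dim_vec (xs b) = Suc n" using xs[OF that(2)] by simp
    have "(H *\<^sub>v xs b) $ a = (\<Sum>c\<in>{0..<Suc n}. H $$ (a,c) * xs b $ c)"
      using that H by (simp add: scalar_prod_def d)
    then show ?thesis using xs[OF that(2)] that by simp
  qed
  have gdvd: "g dvd (1 - (\<Sum>a<n. H $$ (a,j) * xs a $ j))" if j: "j < Suc n" for j
  proof -
    define w where "w = (\<lambda>b. (if b = j then 1 else 0) - (\<Sum>a<n. H $$ (a,b) * xs a $ j))"
    define K where "K = mat (Suc n) (Suc n) (\<lambda>(a,b). if a < n then H $$ (a,b) else w b)"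
    define Y where "Y = mat (Suc n) (Suc n) (\<lambda>(a,b). if b < n then xs b $ a else (if a = j then 1 else (0::int)))"
    have Kc: "K \<in> carrier_mat (Suc n) (Suc n)" and Yc: "Y \<in> carrier_mat (Suc n) (Suc n)"
      unfolding K_def Y_def by auto
    have KY: "(K * Y) $$ (a,b) = (if a < n then (if b < n then (if a = b then 1 else 0) else H $$ (a,j))
        else (if b < n then 0 else w j))" if ab: "a < Suc n" "b < Suc n" for a b
    proof -
      have e: "(K * Y) $$ (a,b) = (\<Sum>c\<in>{0..<Suc n}. K $$ (a,c) * Y $$ (c,b))"
        using ab Kc Yc by (simp add: scalar_prod_def)
      show ?thesis
      proof (cases "a < n")
        case True
        show ?thesis
        proof (cases "b < n")
          case True
          then show ?thesis using e \<open>a < n\<close> hx[OF \<open>a < n\<close> True] by (simp add: K_def Y_def)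
        next
          case False
          then have bn: "b = n" using ab by simp
          have "(\<Sum>c\<in>{0..<Suc n}. K $$ (a,c) * Y $$ (c,b)) = (\<Sum>c\<in>{0..<Suc n}. H $$ (a,c) * (if c = j then 1 else 0))"
            using \<open>a < n\<close> bn by (intro sum.cong) (auto simp: K_def Y_def)
          also have "\<dots> = H $$ (a,j)" using j by (subst sum_ind) auto
          finally show ?thesis using e \<open>a < n\<close> False by simp
        qed
      next
        case an: False
        show ?thesis
        proof (cases "b < n")
          case True
          have "(\<Sum>c\<in>{0..<Suc n}. K $$ (a,c) * Y $$ (c,b)) = (\<Sum>c\<in>{0..<Suc n}. w c * xs b $ c)"
            using an ab True by (intro sum.cong) (auto simp: K_def Y_def)
          also have "\<dots> = (\<Sum>c\<in>{0..<Suc n}. (if c = j then 1 else 0) * xs b $ c)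
              - (\<Sum>c\<in>{0..<Suc n}. \<Sum>a<n. xs a $ j * (H $$ (a,c) * xs b $ c))"
            unfolding w_def by (simp add: algebra_simps sum_subtractf sum_distrib_left sum_distrib_right)
          also have "(\<Sum>c\<in>{0..<Suc n}. \<Sum>a<n. xs a $ j * (H $$ (a,c) * xs b $ c))
              = (\<Sum>a<n. xs a $ j * (\<Sum>c\<in>{0..<Suc n}. H $$ (a,c) * xs b $ c))"
            by (subst sum.swap) (simp only: sum_distrib_left)
          also have "\<dots> = (\<Sum>a<n. xs a $ j * (if a = b then 1 else 0))"
            using True hx by (intro sum.cong) auto
          also have "\<dots> = xs b $ j" using True by (subst sum_ind) auto
          also have "(\<Sum>c\<in>{0..<Suc n}. (if c = j then 1 else 0) * xs b $ c) = xs b $ j"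
            using j by (subst mult.commute) (subst sum_ind, auto)
          finally show ?thesis using e an True by simp
        next
          case False
          then have "b = n" using ab by simp
          have "(\<Sum>c\<in>{0..<Suc n}. K $$ (a,c) * Y $$ (c,b)) = (\<Sum>c\<in>{0..<Suc n}. w c * (if c = j then 1 else 0))"
            using an ab \<open>b = n\<close> by (intro sum.cong) (auto simp: K_def Y_def)
          also have "\<dots> = w j" using j by (subst sum_ind) auto
          finally show ?thesis using e an \<open>b = n\<close> by simp
        qed
      qed
    qed
    have KYc: "K * Y \<in> carrier_mat (Suc n) (Suc n)" using Kc Yc by auto
    have ut: "upper_triangular (K * Y)"
      unfolding upper_triangular_def using KYc KY by auto
    have "det (K * Y) = prod_list (diag_mat (K * Y))"
      by (rule det_upper_triangular[OF ut KYc])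
    also have "diag_mat (K * Y) = map (\<lambda>i. (K * Y) $$ (i,i)) [0..<n] @ [(K * Y) $$ (n,n)]"
      using Kc by (simp add: diag_mat_def)
    also have "map (\<lambda>i. (K * Y) $$ (i,i)) [0..<n] = map (\<lambda>i. 1) [0..<n]"
      using KY by (intro map_cong) auto
    also have "(K * Y) $$ (n,n) = w j" using KY by simp
    finally have dKY: "det (K * Y) = w j" by (simp add: map_replicate_const)
    have "det K = (\<Sum>b<Suc n. K $$ (n,b) * cofactor K n b)"
      by (rule laplace_expansion_row[OF Kc]) simp
    moreover have "g dvd cofactor K n b" if "b < Suc n" for b
    proof -
      have "mat_delete K n b = Hd b"
        unfolding Hd_def K_def mat_delete_def by (rule eq_matI) auto
      moreover have "g dvd det (Hd b)" unfolding g_def using that by (intro Gcd_dvd) auto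
      ultimately show ?thesis unfolding cofactor_def by simp
    qed
    ultimately have "g dvd det K" by (metis (no_types, lifting) dvd_mult dvd_sum lessThan_iff)
    then have "g dvd det (K * Y)" using det_mult[OF Kc Yc] by simp
    then show ?thesis using dKY unfolding w_def by simp
  qed
  have "g dvd (\<Sum>j<Suc n. 1 - (\<Sum>a<n. H $$ (a,j) * xs a $ j))"
    using gdvd by (intro dvd_sum) auto
  also have "(\<Sum>j<Suc n. 1 - (\<Sum>a<n. H $$ (a,j) * xs a $ j)) = int (Suc n) - (\<Sum>a<n. \<Sum>j<Suc n. H $$ (a,j) * xs a $ j)"
    by (simp only: sum_subtractf sum.swap[of _ "{..<Suc n}"]) simp
  also have "(\<Sum>a<n. \<Sum>j<Suc n. H $$ (a,j) * xs a $ j) = (\<Sum>a<n. 1)"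
  proof (intro sum.cong refl)
    fix a assume "a \<in> {..<n}"
    then show "(\<Sum>j<Suc n. H $$ (a,j) * xs a $ j) = 1" using hx[of a a] by (simp add: atLeast0LessThan)
  qed
  finally have "g dvd 1" by simp
  then have "g = 1" unfolding g_def by simp
  then show ?thesis unfolding g_def Hd_def .
qed



definition lamf :: "nat \<Rightarrow> (nat \<Rightarrow> nat \<Rightarrow> int) \<Rightarrow> (nat \<Rightarrow> int) \<Rightarrow> nat \<Rightarrow> int" where
  "lamf D G u = (\<lambda>r. if r < D then (\<Sum>j<D. u j * G j r) else 0)"

lemma lat_iff: "x \<in> lattice D G \<longleftrightarrow> (\<exists>u. x = lamf D G u)"
  unfolding lattice_def lamf_def by auto

lemma lat_add: "a \<in> lattice D G \<Longrightarrow> b \<in> lattice D G \<Longrightarrow> (\<lambda>i. a i + b i) \<in> lattice D G"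
proof -
  assume "a \<in> lattice D G" "b \<in> lattice D G"
  then obtain u v where "a = lamf D G u" "b = lamf D G v" by (auto simp: lat_iff)
  then have "(\<lambda>i. a i + b i) = lamf D G (\<lambda>j. u j + v j)"
    by (auto simp: lamf_def algebra_simps sum.distrib)
  then show ?thesis by (auto simp: lat_iff)
qed

lemma lat_smult: "a \<in> lattice D G \<Longrightarrow> (\<lambda>i. (c::int) * a i) \<in> lattice D G"
proof -
  assume "a \<in> lattice D G"
  then obtain u where "a = lamf D G u" by (auto simp: lat_iff)
  then have "(\<lambda>i. c * a i) = lamf D G (\<lambda>j. c * u j)"
    by (auto simp: lamf_def algebra_simps sum_distrib_left)
  then show ?thesis by (auto simp: lat_iff)
qed

lemma lat_zero: "(\<lambda>_. 0) \<in> lattice D G"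
proof -
  have "(\<lambda>_. 0) = lamf D G (\<lambda>_. 0)" by (auto simp: lamf_def)
  then show ?thesis unfolding lat_iff by blast
qed

lemma lat_diff: "a \<in> lattice D G \<Longrightarrow> b \<in> lattice D G \<Longrightarrow> (\<lambda>i. a i - b i) \<in> lattice D G"
proof -
  assume a: "a \<in> lattice D G" and b: "b \<in> lattice D G"
  have "(\<lambda>i. a i + (-1) * b i) \<in> lattice D G" by (rule lat_add[OF a lat_smult[OF b]])
  moreover have "(\<lambda>i. a i + (-1) * b i) = (\<lambda>i. a i - b i)" by auto
  ultimately show ?thesis by simp
qed

lemma lat_ZD: "lattice D G \<subseteq> ZD D"
  unfolding lattice_def ZD_def by auto

lemma translate_iff: "x \<in> translate S c \<longleftrightarrow> (\<lambda>i. x i - c i) \<in> S"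
proof
  assume "x \<in> translate S c"
  then obtain s where "s \<in> S" "x = vadd s c" unfolding translate_def by auto
  moreover have "(\<lambda>i. vadd s c i - c i) = s" by (auto simp: vadd_def)
  ultimately show "(\<lambda>i. x i - c i) \<in> S" by simp
next
  assume "(\<lambda>i. x i - c i) \<in> S"
  moreover have "x = vadd (\<lambda>i. x i - c i) c" by (auto simp: vadd_def)
  ultimately show "x \<in> translate S c" unfolding translate_def by blast
qed

lemma center_prop:
  assumes T: "lattice_tiling D L S" and x: "x \<in> ZD D"
  shows "center L S x \<in> L \<and> x \<in> translate S (center L S x)"
proof -
  have cov: "(\<Union>a\<in>L. translate S a) = ZD D" and dis: "\<And>a b. a \<in> L \<Longrightarrow> b \<in> L \<Longrightarrow> a \<noteq> b \<Longrightarrow> translate S a \<inter> translate S b = {}"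
    using T unfolding lattice_tiling_def by auto
  from x cov obtain c where c: "c \<in> L" "x \<in> translate S c" by blast
  have u: "c' = c" if "c' \<in> L \<and> x \<in> translate S c'" for c'
  proof (rule ccontr)
    assume "c' \<noteq> c"
    then have "translate S c' \<inter> translate S c = {}" using dis that c by blast
    then show False using that c by blast
  qed
  have "center L S x = c" unfolding center_def
    by (rule the_equality) (use c u in blast)+
  then show ?thesis using c by simp
qed

lemma delta_ZD: "l1 + l2 \<le> D \<Longrightarrow> delta_dir l1 l2 \<in> ZD D"
  unfolding delta_dir_def ZD_def by auto

lemma ZD_add: "a \<in> ZD D \<Longrightarrow> b \<in> ZD D \<Longrightarrow> vadd a b \<in> ZD D"
  unfolding ZD_def vadd_def by auto

lemma folded_prop:
  assumes T: "lattice_tiling D (lattice D G) S" and Sh: "is_shape D S" and dZ: "\<delta> \<in> ZD D"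
  shows "folded_row (lattice D G) S \<delta> k \<in> S \<and>
         (\<lambda>i. int k * \<delta> i - folded_row (lattice D G) S \<delta> k i) \<in> lattice D G"
proof (induction k)
  case 0
  then show ?case using Sh lat_zero[of D G] by (simp add: is_shape_def)
next
  case (Suc k)
  let ?L = "lattice D G"
  let ?p = "folded_row ?L S \<delta> k"
  let ?q = "vadd ?p \<delta>"
  let ?c = "center ?L S ?q"
  have pZ: "?p \<in> ZD D" using Suc Sh by (auto simp: is_shape_def)
  have cp: "?c \<in> ?L \<and> ?q \<in> translate S ?c"
    by (rule center_prop[OF T ZD_add[OF pZ dZ]])
  have ps: "folded_row ?L S \<delta> (Suc k) = (\<lambda>i. ?q i - ?c i)" by (simp add: vsub_def)
  have "(\<lambda>i. ?q i - ?c i) \<in> S" using conjunct2[OF cp] by (simp only: translate_iff)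
  then have A: "folded_row ?L S \<delta> (Suc k) \<in> S" by (simp only: ps)
  have B: "(\<lambda>i. int (Suc k) * \<delta> i - folded_row ?L S \<delta> (Suc k) i)
      = (\<lambda>i. (int k * \<delta> i - ?p i) + ?c i)"
    unfolding ps by (auto simp: vadd_def algebra_simps)
  have C: "(\<lambda>i. (int k * \<delta> i - ?p i) + ?c i) \<in> ?L" using lat_add[OF conjunct2[OF Suc] conjunct1[OF cp]] .
  show ?case unfolding B using A C by (rule conjI)
qed

lemma finite_order:
  assumes T: "lattice_tiling D (lattice D G) S" and Sh: "is_shape D S" and dZ: "\<delta> \<in> ZD D"
  shows "\<exists>N::int. N > 0 \<and> (\<lambda>i. N * \<delta> i) \<in> lattice D G"
proof -
  let ?p = "folded_row (lattice D G) S \<delta>"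
  have "range ?p \<subseteq> S" using folded_prop[OF T Sh dZ] by auto
  then have fin: "finite (range ?p)" using Sh finite_subset unfolding is_shape_def by auto
  have "\<not> inj ?p"
  proof
    assume "inj ?p"
    then have "finite (UNIV :: nat set)" using fin finite_imageD by blast
    then show False by simp
  qed
  then obtain a b where ab: "a \<noteq> b" "?p a = ?p b" unfolding inj_def by blast
  then obtain a b where ab: "a < b" "?p a = ?p b" by (metis linorder_neqE_nat)
  have "(\<lambda>i. (int b * \<delta> i - ?p b i) - (int a * \<delta> i - ?p a i)) \<in> lattice D G"
    using lat_diff folded_prop[OF T Sh dZ] by blast
  moreover have "(\<lambda>i. (int b * \<delta> i - ?p b i) - (int a * \<delta> i - ?p a i)) = (\<lambda>i. (int b - int a) * \<delta> i)"
    using ab(2) by (auto simp: algebra_simps)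
  ultimately show ?thesis using ab(1) by (intro exI[of _ "int b - int a"]) auto
qed

definition spans where
  "spans D G \<delta> \<longleftrightarrow> (\<forall>x\<in>ZD D. \<exists>lam\<in>lattice D G. \<exists>m::int. x = (\<lambda>i. lam i + m * \<delta> i))"

lemma folding_iff_spans:
  assumes T: "lattice_tiling D (lattice D G) S" and Sh: "is_shape D S" and dZ: "\<delta> \<in> ZD D"
  shows "defines_folding (lattice D G) S \<delta> \<longleftrightarrow> spans D G \<delta>"
proof
  let ?L = "lattice D G"
  let ?p = "folded_row ?L S \<delta>"
  assume F: "defines_folding ?L S \<delta>"
  show "spans D G \<delta>" unfolding spans_def
  proof
    fix x assume x: "x \<in> ZD D"
    from T x obtain a where a: "a \<in> ?L" "x \<in> translate S a" unfolding lattice_tiling_def by blast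
    then have "(\<lambda>i. x i - a i) \<in> S" by (simp add: translate_iff)
    then obtain k where k: "(\<lambda>i. x i - a i) = ?p k" using F unfolding defines_folding_def by blast
    have LL: "(\<lambda>i. a i - (int k * \<delta> i - ?p k i)) \<in> ?L"
      using lat_diff[OF a(1) conjunct2[OF folded_prop[OF T Sh dZ]]] .
    have XX: "x = (\<lambda>i. (a i - (int k * \<delta> i - ?p k i)) + int k * \<delta> i)"
    proof
      fix i have "x i - a i = ?p k i" using fun_cong[OF k, of i] by simp
      then show "x i = (a i - (int k * \<delta> i - ?p k i)) + int k * \<delta> i" by simp
    qed
    show "\<exists>lam\<in>?L. \<exists>m::int. x = (\<lambda>i. lam i + m * \<delta> i)"
      by (rule bexI[OF exI[of _ "int k"] LL]) (rule XX)
  qed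
next
  let ?L = "lattice D G"
  let ?p = "folded_row ?L S \<delta>"
  assume Sp: "spans D G \<delta>"
  obtain N :: int where N: "N > 0" "(\<lambda>i. N * \<delta> i) \<in> ?L" using finite_order[OF T Sh dZ] by blast
  show "defines_folding ?L S \<delta>" unfolding defines_folding_def
  proof
    fix s assume s: "s \<in> S"
    then have sZ: "s \<in> ZD D" using Sh unfolding is_shape_def by auto
    then obtain lam m where lm: "lam \<in> ?L" "s = (\<lambda>i. lam i + m * \<delta> i)" using Sp unfolding spans_def by blast
    define k where "k = nat (m mod N)"
    have kk: "int k = m mod N" unfolding k_def using N by simp
    have mk: "m - int k = (m div N) * N" using kk by (simp add: minus_mod_eq_div_mult)
    define c where "c = (\<lambda>i. s i - ?p k i)"
    have c_eq: "c = (\<lambda>i. (lam i + (m div N) * (N * \<delta> i)) + (int k * \<delta> i - ?p k i))"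
    proof
      fix i
      have "m * \<delta> i = (m - int k) * \<delta> i + int k * \<delta> i" by (simp add: algebra_simps)
      then show "c i = (lam i + (m div N) * (N * \<delta> i)) + (int k * \<delta> i - ?p k i)"
        unfolding c_def using lm(2) mk by (simp add: algebra_simps)
    qed
    have cL: "c \<in> ?L" unfolding c_eq
      by (intro lat_add lm(1) lat_smult N(2) conjunct2[OF folded_prop[OF T Sh dZ]])
    have pk: "?p k \<in> S" using folded_prop[OF T Sh dZ] by blast
    have s1: "s \<in> translate S c" unfolding translate_iff c_def using pk by simp
    have s2: "s \<in> translate S (\<lambda>_. 0)" unfolding translate_iff using s by simp
    have "c = (\<lambda>_. 0)"
    proof (rule ccontr)
      assume "c \<noteq> (\<lambda>_. 0)"
      moreover have "\<forall>a\<in>?L. \<forall>b\<in>?L. a \<noteq> b \<longrightarrow> translate S a \<inter> translate S b = {}"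
        using T unfolding lattice_tiling_def by (rule conjunct1)
      ultimately have "translate S c \<inter> translate S (\<lambda>_. 0) = {}"
        using cL lat_zero by blast
      then show False using s1 s2 by blast
    qed
    then have "s = ?p k" unfolding c_def
    proof -
      assume h: "(\<lambda>i. s i - ?p k i) = (\<lambda>_. 0)"
      show "s = ?p k"
      proof
        fix i show "s i = ?p k i" using fun_cong[OF h, of i] by simp
      qed
    qed
    then show "s \<in> range ?p" by blast
  qed
qed

lemma uentry_eq: "uentry l1 l2 G r j = G j r - delta_dir l1 l2 r * G j 0"
  unfolding uentry_def delta_dir_def by auto

lemma Hv:
  assumes D: "D \<ge> 2" and a: "a < D - 1"
  shows "(Hmat D l1 l2 G *\<^sub>v vec D u) $ a = lamf D G u (a+1) - delta_dir l1 l2 (a+1) * lamf D G u 0"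
proof -
  have "(Hmat D l1 l2 G *\<^sub>v vec D u) $ a = (\<Sum>j\<in>{0..<D}. uentry l1 l2 G (a+1) j * u j)"
    using a by (simp add: Hmat_def scalar_prod_def)
  also have "\<dots> = (\<Sum>j<D. u j * G j (a+1)) - delta_dir l1 l2 (a+1) * (\<Sum>j<D. u j * G j 0)"
    by (simp add: uentry_eq atLeast0LessThan algebra_simps sum_subtractf sum_distrib_left)
  finally show ?thesis using a D by (simp add: lamf_def)
qed

lemma spans_iff_col:
  assumes D: "D \<ge> 2" and l1: "l1 \<ge> 1" and l12: "l1 + l2 \<le> D"
  shows "spans D G (delta_dir l1 l2) \<longleftrightarrow>
    (\<forall>y\<in>carrier_vec (D-1). \<exists>v\<in>carrier_vec D. Hmat D l1 l2 G *\<^sub>v v = y)"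
proof
  let ?d = "delta_dir l1 l2"
  have d0: "?d 0 = 1" using l1 by (simp add: delta_dir_def)
  assume Sp: "spans D G ?d"
  show "\<forall>y\<in>carrier_vec (D-1). \<exists>v\<in>carrier_vec D. Hmat D l1 l2 G *\<^sub>v v = y"
  proof
    fix y :: "int vec" assume y: "y \<in> carrier_vec (D-1)"
    define x where "x = (\<lambda>i. if 1 \<le> i \<and> i < D then y $ (i-1) else 0)"
    have "x \<in> ZD D" unfolding x_def ZD_def by auto
    then obtain lam m where lm: "lam \<in> lattice D G" "x = (\<lambda>i. lam i + m * ?d i)"
      using Sp unfolding spans_def by blast
    obtain u where u: "lam = lamf D G u" using lm(1) lat_iff by blast
    have l0: "lamf D G u 0 = - m" using fun_cong[OF lm(2), of 0] d0 D unfolding u by (simp add: x_def)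
    have "Hmat D l1 l2 G *\<^sub>v vec D u = y"
    proof (rule eq_vecI)
      fix a assume "a < dim_vec y"
      then have a: "a < D - 1" using y by simp
      have "x (a+1) = lamf D G u (a+1) + m * ?d (a+1)" using fun_cong[OF lm(2), of "a+1"] unfolding u by simp
      moreover have "x (a+1) = y $ a" using a unfolding x_def by auto
      ultimately show "(Hmat D l1 l2 G *\<^sub>v vec D u) $ a = y $ a"
        unfolding Hv[OF D a] l0 by (simp add: algebra_simps)
    qed (use y in \<open>simp add: Hmat_def\<close>)
    then show "\<exists>v\<in>carrier_vec D. Hmat D l1 l2 G *\<^sub>v v = y" by (intro bexI[of _ "vec D u"]) auto
  qed
next
  let ?d = "delta_dir l1 l2"
  have d0: "?d 0 = 1" using l1 by (simp add: delta_dir_def)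
  assume C: "\<forall>y\<in>carrier_vec (D-1). \<exists>v\<in>carrier_vec D. Hmat D l1 l2 G *\<^sub>v v = y"
  show "spans D G ?d" unfolding spans_def
  proof
    fix x assume x: "x \<in> ZD D"
    define y where "y = vec (D-1) (\<lambda>a. x (a+1) - ?d (a+1) * x 0)"
    obtain v where v: "v \<in> carrier_vec D" "Hmat D l1 l2 G *\<^sub>v v = y" using C[rule_format, of y] unfolding y_def by auto
    define u where "u = (\<lambda>j. v $ j)"
    have vu: "vec D u = v" using v(1) unfolding u_def by auto
    define m where "m = x 0 - lamf D G u 0"
    have "x = (\<lambda>i. lamf D G u i + m * ?d i)"
    proof
      fix i
      show "x i = lamf D G u i + m * ?d i"
      proof (cases "i = 0")
        case True then show ?thesis using d0 by (simp add: m_def)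
      next
        case False
        show ?thesis
        proof (cases "i < D")
          case True
          then have a: "i - 1 < D - 1" using False by simp
          have "(Hmat D l1 l2 G *\<^sub>v vec D u) $ (i-1) = y $ (i-1)" using v(2) vu by simp
          then have "lamf D G u i - ?d i * lamf D G u 0 = x i - ?d i * x 0"
            using Hv[OF D a, of l1 l2 G u] a False by (simp add: y_def)
          then show ?thesis by (simp add: m_def algebra_simps)
        next
          case nD: False
          then have "x i = 0" using x unfolding ZD_def by auto
          moreover have "?d i = 0" using nD l12 by (simp add: delta_dir_def)
          ultimately show ?thesis using nD by (simp add: lamf_def)
        qed
      qed
    qed
    moreover have "lamf D G u \<in> lattice D G" using lat_iff by blast
    ultimately show "\<exists>lam\<in>lattice D G. \<exists>m::int. x = (\<lambda>i. lam i + m * ?d i)" by blast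
  qed
qed


theorem mainTheorem5:
  fixes D l1 l2 :: nat and G :: "nat \<Rightarrow> nat \<Rightarrow> int" and S :: "(nat \<Rightarrow> int) set"
  assumes "D \<ge> 2"
    and "rows_lin_indep D G"
    and "is_shape D S"
    and "lattice_tiling D (lattice D G) S"
    and "l1 \<ge> 1" and "l1 + l2 \<le> D"
  shows "defines_folding (lattice D G) S (delta_dir l1 l2) \<longleftrightarrow>
         Gcd ((\<lambda>i. det (Hdel D l1 l2 G i)) ` {..<D}) = 1"
proof -
  obtain n where n: "D = Suc n" using assms(1) by (cases D) auto
  have Hc: "Hmat D l1 l2 G \<in> carrier_mat n (Suc n)" unfolding Hmat_def n by simp
  have "defines_folding (lattice D G) S (delta_dir l1 l2) \<longleftrightarrow> spans D G (delta_dir l1 l2)"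
    by (rule folding_iff_spans[OF assms(4) assms(3) delta_ZD[OF assms(6)]])
  also have "\<dots> \<longleftrightarrow> (\<forall>y\<in>carrier_vec (D-1). \<exists>v\<in>carrier_vec D. Hmat D l1 l2 G *\<^sub>v v = y)"
    by (rule spans_iff_col[OF assms(1) assms(5) assms(6)])
  also have "\<dots> \<longleftrightarrow> Gcd ((\<lambda>i. det (Hdel D l1 l2 G i)) ` {..<D}) = 1"
  proof -
    have e1: "D - 1 = n" and e2: "{..<D} = {..<Suc n}" and e3: "carrier_vec D = carrier_vec (Suc n)"
      using n by auto
    show ?thesis unfolding Hdel_def e1 e2 e3 using col_from_gcd[OF Hc] gcd_from_col[OF Hc] by blast
  qed
  finally show ?thesis .
qed

end
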